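(* Let $p$ be a prime, $k\ge 1$, and $q=p^k$. Every integer group determinant $D$ of the group $GA(1,q)$ can be written in the form $$D=AB^{q-1},$$ where $A$ is a $\mathbb Z_{q-1}$ integer group determinant and $B$ is an integer with $B\equiv A \pmod q$.
   Context: For a finite group $G=\{g_1,\dots,g_n\}$ and an element $\sum_{g\in G}a_g g$ of the group ring $\mathbb Z[G]$ (all $a_g\in\mathbb Z$), the group determinant is $D\left(\sum_{g\in G}a_g g\right)=\det\left(a_{g_ig_j^{-1}}\right)_{i,j=1}^n$. An integer group determinant of $G$ is any integer of this form (with integer coefficients $a_g$). A $\mathbb Z_m$ integer group determinant (or $\mathbb Z_m$ integer determinant) is an integer group determinant of the cyclic group $\mathbb Z_m$; equivalently, an integer of the form $\prod_{x^m=1}f(x)$ for some $f\in\mathbb Z[x]$, the product being over all complex $m$-th roots of unity. The general affine group of degree one over $\mathbb F_q$ is $GA(1,q)=\left\{\begin{pmatrix} a & b\\ 0 & 1\end{pmatrix}: a\in\mathbb F_q^*,\ b\in\mathbb F_q\right\}$ under matrix multiplication, i.e. the semidirect product $\mathbb F_q\rtimes\mathbb F_q^*$ with $\mathbb F_q^*$ acting by multiplication; it has order $q(q-1)$. *)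

theory Defs
  imports "HOL-Combinatorics.Permutations" "HOL-Number_Theory.Cong"
    "HOL-Computational_Algebra.Primes"
begin

definition group_det ::
  "'g set \<Rightarrow> ('g \<Rightarrow> 'g \<Rightarrow> 'g) \<Rightarrow> ('g \<Rightarrow> 'g) \<Rightarrow> ('g \<Rightarrow> int) \<Rightarrow> int" where
  "group_det G gmul ginv a =
     (\<Sum>\<sigma> \<in> {\<sigma>. \<sigma> permutes G}. sign \<sigma> * (\<Prod>g\<in>G. a (gmul g (ginv (\<sigma> g)))))"

definition int_group_det :: "'g set \<Rightarrow> ('g \<Rightarrow> 'g \<Rightarrow> 'g) \<Rightarrow> ('g \<Rightarrow> 'g) \<Rightarrow> int \<Rightarrow> bool" where
  "int_group_det G gmul ginv D \<longleftrightarrow> (\<exists>a. D = group_det G gmul ginv a)"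

definition cyc_carrier :: "nat \<Rightarrow> nat set" where
  "cyc_carrier m = {0..<m}"
definition cyc_mult :: "nat \<Rightarrow> nat \<Rightarrow> nat \<Rightarrow> nat" where
  "cyc_mult m x y = (x + y) mod m"
definition cyc_inv :: "nat \<Rightarrow> nat \<Rightarrow> nat" where
  "cyc_inv m x = (m - x) mod m"

definition cyclic_int_det :: "nat \<Rightarrow> int \<Rightarrow> bool" where
  "cyclic_int_det m D \<longleftrightarrow> int_group_det (cyc_carrier m) (cyc_mult m) (cyc_inv m) D"

text \<open>GA(1,F): the pair (a,b) stands for the matrix [[a,b],[0,1]] with a \<noteq> 0.\<close>
definition ga_carrier :: "('a::field \<times> 'a) set" where
  "ga_carrier = {(a, b). a \<noteq> 0}"
definition ga_mult :: "('a::field \<times> 'a) \<Rightarrow> ('a \<times> 'a) \<Rightarrow> ('a \<times> 'a)" where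
  "ga_mult x y = (fst x * fst y, fst x * snd y + snd x)"
definition ga_inv :: "('a::field \<times> 'a) \<Rightarrow> ('a \<times> 'a)" where
  "ga_inv x = (inverse (fst x), - (snd x / fst x))"

end

theory Submission
  imports Defs "Jordan_Normal_Form.Determinant" "HOL-Computational_Algebra.Polynomial"
    "HOL-Algebra.Multiplicative_Group"
begin

definition ldet :: "'i set \<Rightarrow> ('i \<Rightarrow> 'i \<Rightarrow> 'r::comm_ring_1) \<Rightarrow> 'r" where
  "ldet I M = (\<Sum>\<sigma>\<in>{\<sigma>. \<sigma> permutes I}. of_int (sign \<sigma>) * (\<Prod>i\<in>I. M i (\<sigma> i)))"

lemma ldet_bij:
  assumes f: "bij_betw f J I" and fin: "finite J"
  shows "ldet I M = ldet J (\<lambda>i j. M (f i) (f j))"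
proof -
  have fi: "bij_betw (inv_into J f) I J" using f by (rule bij_betw_inv_into)
  have inj: "inj_on f J" using f by (auto simp: bij_betw_def)
  have "ldet J (\<lambda>i j. M (f i) (f j)) = ldet I M"
  unfolding ldet_def
  proof (rule sum.reindex_bij_witness[where j = "map_permutation J f" and i = "map_permutation I (inv_into J f)"])
    fix \<sigma> assume "\<sigma> \<in> {\<sigma>. \<sigma> permutes I}"
    hence s: "\<sigma> permutes I" by simp
    show "map_permutation I (inv_into J f) \<sigma> \<in> {\<sigma>. \<sigma> permutes J}"
      using map_permutation_permutes[OF fi s] by simp
    show "map_permutation J f (map_permutation I (inv_into J f) \<sigma>) = \<sigma>"
      by (rule map_permutation_compose_inv[OF fi s]) (use f in \<open>auto simp: bij_betw_def f_inv_into_f\<close>)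
  next
    fix p assume "p \<in> {\<sigma>. \<sigma> permutes J}"
    hence p: "p permutes J" by simp
    show "map_permutation J f p \<in> {\<sigma>. \<sigma> permutes I}"
      using map_permutation_permutes[OF f p] by simp
    show "map_permutation I (inv_into J f) (map_permutation J f p) = p"
      by (rule map_permutation_compose_inv[OF f p]) (use inj in auto)
    have "sign (map_permutation J f p) = sign p"
      by (rule sign_map_permutation[OF inj p fin])
    moreover have "(\<Prod>i\<in>I. M i (map_permutation J f p i)) = (\<Prod>j\<in>J. M (f j) (f (p j)))"
    proof -
      have "(\<Prod>i\<in>I. M i (map_permutation J f p i)) = (\<Prod>j\<in>J. M (f j) (map_permutation J f p (f j)))"
        using prod.reindex_bij_betw[OF f, of "\<lambda>i. M i (map_permutation J f p i)"] by simp
      also have "\<dots> = (\<Prod>j\<in>J. M (f j) (f (p j)))"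
        by (rule prod.cong) (auto simp: map_permutation_apply[OF inj])
      finally show ?thesis .
    qed
    ultimately show "of_int (sign (map_permutation J f p)) * (\<Prod>i\<in>I. M i (map_permutation J f p i))
        = of_int (sign p) * (\<Prod>i\<in>J. M (f i) (f (p i)))" by simp
  qed
  thus ?thesis by simp
qed

lemma ldet_JNF: "ldet {0..<n} M = det (mat n n (\<lambda>(i,j). M i j))"
  unfolding ldet_def
  by (subst det_def'[of _ n]) (auto intro!: sum.cong prod.cong simp: permutes_in_image)

lemma ldet_mult:
  fixes A B :: "'i \<Rightarrow> 'i \<Rightarrow> 'r::comm_ring_1"
  assumes fin: "finite I"
  shows "ldet I (\<lambda>i j. \<Sum>k\<in>I. A i k * B k j) = ldet I A * ldet I B"
proof -
  obtain e where e: "bij_betw e {0..<card I} I" using ex_bij_betw_nat_finite[OF fin] by blast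
  define n where "n = card I"
  have e': "bij_betw e {0..<n} I" using e n_def by simp
  define A' where "A' = mat n n (\<lambda>(i,j). A (e i) (e j))"
  define B' where "B' = mat n n (\<lambda>(i,j). B (e i) (e j))"
  have "ldet I (\<lambda>i j. \<Sum>k\<in>I. A i k * B k j) = ldet {0..<n} (\<lambda>i j. \<Sum>k\<in>I. A (e i) k * B k (e j))"
    by (rule ldet_bij[OF e']) simp
  also have "\<dots> = det (mat n n (\<lambda>(i,j). \<Sum>k\<in>I. A (e i) k * B k (e j)))" by (rule ldet_JNF)
  also have "mat n n (\<lambda>(i,j). \<Sum>k\<in>I. A (e i) k * B k (e j)) = A' * B'"
  proof (rule eq_matI)
    fix i j assume ij: "i < dim_row (A' * B')" "j < dim_col (A' * B')"
    hence ij': "i < n" "j < n" by (auto simp: A'_def B'_def)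
    have "(A' * B') $$ (i,j) = (\<Sum>k\<in>{0..<n}. A (e i) (e k) * B (e k) (e j))"
      using ij' by (auto simp: A'_def B'_def scalar_prod_def intro!: sum.cong)
    also have "\<dots> = (\<Sum>k\<in>I. A (e i) k * B k (e j))"
      using sum.reindex_bij_betw[OF e', of "\<lambda>k. A (e i) k * B k (e j)"] by simp
    finally show "mat n n (\<lambda>(i,j). \<Sum>k\<in>I. A (e i) k * B k (e j)) $$ (i, j) = (A' * B') $$ (i, j)"
      using ij' by simp
  qed (auto simp: A'_def B'_def)
  also have "det (A' * B') = det A' * det B'"
    by (rule det_mult) (auto simp: A'_def B'_def)
  also have "det A' = ldet I A"
    unfolding A'_def by (subst ldet_JNF[symmetric]) (rule ldet_bij[OF e', symmetric], simp)
  also have "det B' = ldet I B"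
    unfolding B'_def by (subst ldet_JNF[symmetric]) (rule ldet_bij[OF e', symmetric], simp)
  finally show ?thesis .
qed

lemma ldet_diag:
  assumes fin: "finite I"
  shows "ldet I (\<lambda>i j. if i = j then d i else 0) = (\<Prod>i\<in>I. d i)"
proof -
  let ?g = "\<lambda>\<sigma>. of_int (sign \<sigma>) * (\<Prod>i\<in>I. (if i = \<sigma> i then d i else 0))"
  have fp: "finite {\<sigma>. \<sigma> permutes I}" using fin by (rule finite_permutations)
  have idin: "id \<in> {\<sigma>. \<sigma> permutes I}" by (simp add: permutes_id)
  have "ldet I (\<lambda>i j. if i = j then d i else 0) = ?g id + sum ?g ({\<sigma>. \<sigma> permutes I} - {id})"
    unfolding ldet_def by (rule sum.remove[OF fp idin])
  also have "sum ?g ({\<sigma>. \<sigma> permutes I} - {id}) = 0"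
  proof (rule sum.neutral, rule ballI)
    fix \<sigma> assume "\<sigma> \<in> {\<sigma>. \<sigma> permutes I} - {id}"
    hence s: "\<sigma> permutes I" "\<sigma> \<noteq> id" by auto
    then obtain i where i: "\<sigma> i \<noteq> i" by (auto simp: fun_eq_iff)
    hence "i \<in> I" using s(1) by (meson permutes_not_in)
    hence "(\<Prod>j\<in>I. (if j = \<sigma> j then d j else 0)) = 0"
      using i fin by (intro prod_zero) (auto intro!: bexI[of _ i])
    thus "?g \<sigma> = 0" by simp
  qed
  finally show ?thesis by simp
qed

lemma ldet_of_int: "ldet I (\<lambda>i j. of_int (M i j)) = (of_int (ldet I M) :: 'r::comm_ring_1)"
  unfolding ldet_def by (simp add: of_int_sum of_int_prod)

lemma perm_maps_part:
  assumes s: "\<sigma> permutes (I1 \<union> I2)" and fin: "finite I1" and disj: "I1 \<inter> I2 = {}"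
    and m: "\<forall>i\<in>I1. \<sigma> i \<in> I1"
  shows "bij_betw \<sigma> I1 I1" "bij_betw \<sigma> I2 I2"
proof -
  have inj: "inj \<sigma>" using s by (rule permutes_inj)
  have e1: "\<sigma> ` I1 = I1"
    by (rule endo_inj_surj[OF fin]) (use m inj in \<open>auto simp: inj_on_def\<close>)
  show "bij_betw \<sigma> I1 I1" using e1 inj by (auto simp: bij_betw_def inj_on_def)
  have "\<sigma> ` (I1 \<union> I2) = I1 \<union> I2" using s by (rule permutes_image)
  hence "\<sigma> ` I2 = I2" using e1 inj disj
    by (auto simp: inj_on_def image_Un) (blast+)?
  thus "bij_betw \<sigma> I2 I2" using inj by (auto simp: bij_betw_def inj_on_def)
qed

lemma ldet_block2:
  assumes fin1: "finite I1" and fin2: "finite I2" and disj: "I1 \<inter> I2 = {}"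
    and z1: "\<And>i j. i \<in> I1 \<Longrightarrow> j \<in> I2 \<Longrightarrow> M i j = 0"
  shows "ldet (I1 \<union> I2) M = ldet I1 M * ldet I2 M"
proof -
  let ?P = "\<lambda>I. {\<sigma>. \<sigma> permutes I}"
  let ?K = "{\<sigma>. \<sigma> permutes (I1 \<union> I2) \<and> (\<forall>i\<in>I1. \<sigma> i \<in> I1)}"
  let ?g = "\<lambda>\<sigma>. of_int (sign \<sigma>) * (\<Prod>i\<in>I1 \<union> I2. M i (\<sigma> i))"
  have fin: "finite (I1 \<union> I2)" using fin1 fin2 by simp
  have step1: "ldet (I1 \<union> I2) M = sum ?g ?K"
    unfolding ldet_def
  proof (rule sum.mono_neutral_right)
    show "finite (?P (I1 \<union> I2))" using fin by (rule finite_permutations)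
    show "?K \<subseteq> ?P (I1 \<union> I2)" by auto
    show "\<forall>\<sigma>\<in>?P (I1 \<union> I2) - ?K. ?g \<sigma> = 0"
    proof
      fix \<sigma> assume "\<sigma> \<in> ?P (I1 \<union> I2) - ?K"
      then obtain i where \<sigma>: "\<sigma> permutes (I1 \<union> I2)" and i: "i \<in> I1" "\<sigma> i \<notin> I1" by auto
      have "\<sigma> i \<in> I2" using permutes_in_image[OF \<sigma>] i by auto
      hence "M i (\<sigma> i) = 0" using z1 i by auto
      hence "(\<Prod>i\<in>I1 \<union> I2. M i (\<sigma> i)) = 0" using fin i by (intro prod_zero) (auto intro!: bexI[of _ i])
      thus "?g \<sigma> = 0" by simp
    qed
  qed
  have "ldet I1 M * ldet I2 M = (\<Sum>\<sigma>1\<in>?P I1. \<Sum>\<sigma>2\<in>?P I2. (of_int (sign \<sigma>1) * (\<Prod>i\<in>I1. M i (\<sigma>1 i))) * (of_int (sign \<sigma>2) * (\<Prod>i\<in>I2. M i (\<sigma>2 i))))"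
    unfolding ldet_def by (rule sum_product)
  also have "\<dots> = (\<Sum>(\<sigma>1,\<sigma>2)\<in>?P I1 \<times> ?P I2. (of_int (sign \<sigma>1) * (\<Prod>i\<in>I1. M i (\<sigma>1 i))) * (of_int (sign \<sigma>2) * (\<Prod>i\<in>I2. M i (\<sigma>2 i))))"
    by (rule sum.cartesian_product)
  also have "\<dots> = sum ?g ?K"
  proof (rule sum.reindex_bij_witness[where i = "\<lambda>\<sigma>. (restrict_id \<sigma> I1, restrict_id \<sigma> I2)" and j = "\<lambda>(\<sigma>1,\<sigma>2). \<sigma>1 \<circ> \<sigma>2"])
    fix a assume "a \<in> ?P I1 \<times> ?P I2"
    then obtain \<sigma>1 \<sigma>2 where a: "a = (\<sigma>1,\<sigma>2)" and s1: "\<sigma>1 permutes I1" and s2: "\<sigma>2 permutes I2" by auto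
    have n1: "\<sigma>1 x = x" if "x \<notin> I1" for x using s1 that by (rule permutes_not_in)
    have n2: "\<sigma>2 x = x" if "x \<notin> I2" for x using s2 that by (rule permutes_not_in)
    have i1: "\<sigma>1 x \<in> I1" if "x \<in> I1" for x using s1 that by (simp add: permutes_in_image)
    have i2: "\<sigma>2 x \<in> I2" if "x \<in> I2" for x using s2 that by (simp add: permutes_in_image)
    have r1: "restrict_id (\<sigma>1 \<circ> \<sigma>2) I1 = \<sigma>1"
    proof
      fix x show "restrict_id (\<sigma>1 \<circ> \<sigma>2) I1 x = \<sigma>1 x"
      proof (cases "x \<in> I1")
        case True
        hence "x \<notin> I2" using disj by blast
        thus ?thesis using True n2 by simp
      qed (use n1 in simp)
    qed
    have r2: "restrict_id (\<sigma>1 \<circ> \<sigma>2) I2 = \<sigma>2"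
    proof
      fix x show "restrict_id (\<sigma>1 \<circ> \<sigma>2) I2 x = \<sigma>2 x"
        using disj n1 n2 i2 by (cases "x \<in> I2") auto
    qed
    show "(restrict_id ((\<lambda>(\<sigma>1,\<sigma>2). \<sigma>1 \<circ> \<sigma>2) a) I1, restrict_id ((\<lambda>(\<sigma>1,\<sigma>2). \<sigma>1 \<circ> \<sigma>2) a) I2) = a"
      using r1 r2 a by simp
    have c: "\<sigma>1 \<circ> \<sigma>2 permutes (I1 \<union> I2)"
      by (rule permutes_compose) (use s1 s2 in \<open>auto intro: permutes_subset\<close>)
    show "(\<lambda>(\<sigma>1,\<sigma>2). \<sigma>1 \<circ> \<sigma>2) a \<in> ?K"
      using c a disj n2 i1 by (auto simp: disjoint_iff)
    have sg: "sign (\<sigma>1 \<circ> \<sigma>2) = sign \<sigma>1 * sign \<sigma>2"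
      by (rule sign_compose) (use s1 s2 fin1 fin2 in \<open>auto intro: permutes_imp_permutation\<close>)
    have pr: "(\<Prod>i\<in>I1 \<union> I2. M i ((\<sigma>1 \<circ> \<sigma>2) i)) = (\<Prod>i\<in>I1. M i (\<sigma>1 i)) * (\<Prod>i\<in>I2. M i (\<sigma>2 i))"
    proof -
      have "(\<Prod>i\<in>I1 \<union> I2. M i ((\<sigma>1 \<circ> \<sigma>2) i)) = (\<Prod>i\<in>I1. M i ((\<sigma>1 \<circ> \<sigma>2) i)) * (\<Prod>i\<in>I2. M i ((\<sigma>1 \<circ> \<sigma>2) i))"
        by (rule prod.union_disjoint) (use fin1 fin2 disj in auto)
      also have "(\<Prod>i\<in>I1. M i ((\<sigma>1 \<circ> \<sigma>2) i)) = (\<Prod>i\<in>I1. M i (\<sigma>1 i))"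
        by (rule prod.cong) (use disj n2 in \<open>auto simp: disjoint_iff\<close>)
      also have "(\<Prod>i\<in>I2. M i ((\<sigma>1 \<circ> \<sigma>2) i)) = (\<Prod>i\<in>I2. M i (\<sigma>2 i))"
        by (rule prod.cong) (use disj n1 i2 in \<open>force simp: disjoint_iff\<close>)+
      finally show ?thesis .
    qed
    show "?g ((\<lambda>(\<sigma>1,\<sigma>2). \<sigma>1 \<circ> \<sigma>2) a) = (case a of (\<sigma>1,\<sigma>2) \<Rightarrow> (of_int (sign \<sigma>1) * (\<Prod>i\<in>I1. M i (\<sigma>1 i))) * (of_int (sign \<sigma>2) * (\<Prod>i\<in>I2. M i (\<sigma>2 i))))"
      using a sg pr by (simp add: mult_ac)
  next
    fix \<sigma> assume "\<sigma> \<in> ?K"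
    hence s: "\<sigma> permutes (I1 \<union> I2)" and m: "\<forall>i\<in>I1. \<sigma> i \<in> I1" by auto
    have b1: "bij_betw \<sigma> I1 I1" and b2: "bij_betw \<sigma> I2 I2"
      using perm_maps_part[OF s fin1 disj m] by auto
    show "(restrict_id \<sigma> I1, restrict_id \<sigma> I2) \<in> ?P I1 \<times> ?P I2"
      using permutes_restrict_id[OF b1] permutes_restrict_id[OF b2] by auto
    have "restrict_id \<sigma> I1 \<circ> restrict_id \<sigma> I2 = \<sigma>"
    proof
      fix x
      show "(restrict_id \<sigma> I1 \<circ> restrict_id \<sigma> I2) x = \<sigma> x"
      proof (cases "x \<in> I2")
        case True
        hence "\<sigma> x \<in> I2" using b2 by (auto simp: bij_betw_def)
        hence "\<sigma> x \<notin> I1" using disj by blast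
        thus ?thesis using True by simp
      next
        case False
        thus ?thesis using permutes_not_in[OF s, of x] by (cases "x \<in> I1") auto
      qed
    qed
    thus "(\<lambda>(\<sigma>1,\<sigma>2). \<sigma>1 \<circ> \<sigma>2) (restrict_id \<sigma> I1, restrict_id \<sigma> I2) = \<sigma>" by simp
  qed
  finally show ?thesis using step1 by simp
qed

lemma ldet_empty: "ldet {} M = 1"
  unfolding ldet_def by (simp add: permutes_empty)

lemma ldet_blockdiag:
  fixes M :: "'y \<Rightarrow> 's \<Rightarrow> 's \<Rightarrow> 'r::comm_ring_1"
  assumes finS: "finite S" and finY: "finite Y"
  shows "ldet (S \<times> Y) (\<lambda>g h. if snd g = snd h then M (snd g) (fst g) (fst h) else 0) = (\<Prod>y\<in>Y. ldet S (M y))"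
  using finY
proof (induction Y rule: finite_induct)
  case empty
  thus ?case by (simp add: ldet_empty)
next
  case (insert y Y)
  have eq: "S \<times> insert y Y = (S \<times> {y}) \<union> (S \<times> Y)" by auto
  let ?B = "\<lambda>g h. if snd g = snd h then M (snd g) (fst g) (fst h) else 0"
  have "ldet (S \<times> insert y Y) ?B = ldet (S \<times> {y}) ?B * ldet (S \<times> Y) ?B"
    unfolding eq by (rule ldet_block2) (use finS insert in auto)
  also have "ldet (S \<times> {y}) ?B = ldet S (M y)"
  proof -
    have "bij_betw (\<lambda>s. (s,y)) S (S \<times> {y})" by (auto simp: bij_betw_def inj_on_def)
    from ldet_bij[OF this finS, of ?B] show ?thesis by simp
  qed
  finally show ?case using insert by simp
qed

lemma ldet_cong:
  assumes "\<And>i j. i \<in> I \<Longrightarrow> j \<in> I \<Longrightarrow> M i j = M' i j"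
  shows "ldet I M = ldet I M'"
  unfolding ldet_def
  by (intro sum.cong refl arg_cong2[where f="(*)"] prod.cong) (auto simp: assms permutes_in_image)

lemma sum_prod_set: "(\<Sum>k\<in>A \<times> B. f k) = (\<Sum>u\<in>A. \<Sum>v\<in>B. f (u,v))"
  by (simp add: sum.cartesian_product)


lemma power_card_eq_same:
  fixes x :: "'a :: {finite,field}"
  shows "x ^ card (UNIV :: 'a set) = x"
proof (cases "x = 0")
  case False
  have "x * (\<Prod>y\<in>UNIV-{0}. x * y) = x * x ^ (card (UNIV :: 'a set) - 1) * \<Prod>(UNIV-{0})"
    by (simp add: prod.distrib mult_ac)
  also have "x * x ^ (card (UNIV :: 'a set) - 1) = x ^ Suc (card (UNIV :: 'a set) - 1)"
    by (subst power_Suc) auto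
  also have "Suc (card (UNIV :: 'a set) - 1) = card (UNIV :: 'a set)"
    using finite_UNIV_card_ge_0[where ?'a = 'a] by simp
  also have "(\<Prod>y\<in>UNIV-{0}. x * y) = (\<Prod>y\<in>UNIV-{0}. y)"
    by (rule prod.reindex_bij_witness[of _ "\<lambda>y. y / x" "\<lambda>y. x * y"]) (use False in auto)
  finally show ?thesis
    by simp
qed (use finite_UNIV_card_ge_0[where ?'a = 'a] in auto)

lemma power_card_minus_one:
  fixes x :: "'a :: {finite,field}"
  assumes "x \<noteq> 0"
  shows "x ^ (card (UNIV :: 'a set) - 1) = 1"
proof -
  have c: "card (UNIV :: 'a set) = Suc (card (UNIV :: 'a set) - 1)"
    using finite_UNIV_card_ge_0[where ?'a = 'a] by simp
  have "x * x ^ (card (UNIV :: 'a set) - 1) = x * 1"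
    using power_card_eq_same[of x] by (subst (asm) c) simp
  thus ?thesis using assms by simp
qed

lemma of_nat_card_field: "of_nat (card (UNIV :: 'a :: {finite,field} set)) = (0::'a)"
proof -
  have "(\<Sum>x\<in>UNIV. x + 1) = (\<Sum>x\<in>(UNIV::'a set). x)"
    by (rule sum.reindex_bij_witness[of _ "\<lambda>x. x - 1" "\<lambda>x. x + 1"]) auto
  thus ?thesis by (simp add: sum.distrib)
qed

lemma frob:
  fixes x y :: "'a::comm_ring_1"
  assumes p: "prime p" and c: "of_nat p = (0::'a)"
  shows "(x + y) ^ p = x ^ p + y ^ p"
proof -
  have p0: "p \<noteq> 0" using p by auto
  have "(x+y)^p = (\<Sum>k\<le>p. of_nat (p choose k) * x^k * y^(p-k))" by (rule binomial_ring)
  also have "\<dots> = (\<Sum>k\<in>{0,p}. of_nat (p choose k) * x^k * y^(p-k))"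
  proof (rule sum.mono_neutral_right)
    show "\<forall>k\<in>{..p} - {0, p}. of_nat (p choose k) * x ^ k * y ^ (p - k) = 0"
    proof
      fix k assume k: "k \<in> {..p} - {0, p}"
      hence "p dvd (p choose k)" using p by (intro dvd_choose_prime) auto
      then obtain m where "p choose k = p * m" by auto
      hence "of_nat (p choose k) = (0::'a)" using c by simp
      thus "of_nat (p choose k) * x ^ k * y ^ (p - k) = 0" by simp
    qed
  qed auto
  also have "\<dots> = x^p + y^p" using p0 by simp
  finally show ?thesis .
qed

lemma frob_pow:
  fixes x y :: "'a::comm_ring_1"
  assumes p: "prime p" and c: "of_nat p = (0::'a)"
  shows "(x + y) ^ (p ^ j) = x ^ (p ^ j) + y ^ (p ^ j)"
proof (induction j)
  case (Suc j)
  have "(x + y) ^ (p ^ Suc j) = ((x + y) ^ (p ^ j)) ^ p" by (simp add: power_mult[symmetric] mult.commute)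
  also have "\<dots> = (x ^ (p ^ j)) ^ p + (y ^ (p ^ j)) ^ p" unfolding Suc by (rule frob[OF p c])
  finally show ?case by (simp add: power_mult[symmetric] mult.commute)
qed simp

lemma frob_sum:
  fixes f :: "'b \<Rightarrow> 'a::comm_ring_1"
  assumes p: "prime p" and c: "of_nat p = (0::'a)" and A: "finite A"
  shows "(\<Sum>i\<in>A. f i) ^ (p ^ j) = (\<Sum>i\<in>A. f i ^ (p ^ j))"
  using A
proof (induction A rule: finite_induct)
  case empty
  have "p ^ j \<noteq> 0" using p by auto
  thus ?case by (simp add: zero_power)
next
  case (insert a A)
  thus ?case by (simp add: frob_pow[OF p c])
qed

context
  fixes p k :: nat
  assumes prime_p: "prime p" and k1: "k \<ge> 1" and card_q: "card (UNIV :: 'a::{finite,field} set) = p ^ k"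
begin

lemma charp: "of_nat p = (0::'a)"
proof -
  have "of_nat (p^k) = (0::'a)" using of_nat_card_field[where 'a='a] card_q by metis
  hence "(of_nat p::'a)^k = 0" by simp
  thus ?thesis by simp
qed

lemma CHAR_p: "CHAR('a) = p"
proof -
  have d: "CHAR('a) dvd p" using charp by (simp add: of_nat_eq_0_iff_char_dvd)
  have "CHAR('a) \<noteq> 1"
  proof
    assume "CHAR('a) = 1"
    hence "of_nat 1 = (0::'a)" by (simp add: of_nat_eq_0_iff_char_dvd)
    thus False by simp
  qed
  with d prime_p show ?thesis by (auto simp: prime_nat_iff)
qed

lemma of_nat_inj_p:
  assumes "i < p" "j < p" "of_nat i = (of_nat j :: 'a)"
  shows "i = j"
proof (rule ccontr)
  assume ne: "i \<noteq> j"
  show False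
  proof (cases "i < j")
    case True
    hence "p dvd (j - i)" using assms(3) of_nat_eq_iff_char_dvd[of i j, where 'a='a] CHAR_p by simp
    moreover have "0 < j - i" "j - i < p" using True assms by auto
    ultimately show False using dvd_imp_le by fastforce
  next
    case False
    hence "j < i" using ne by simp
    hence "p dvd (i - j)" using assms(3) of_nat_eq_iff_char_dvd[of j i, where 'a='a] CHAR_p by simp
    moreover have "0 < i - j" "i - j < p" using \<open>j < i\<close> assms by auto
    ultimately show False using dvd_imp_le by fastforce
  qed
qed

lemma of_nat_mod_p: "(of_nat (m mod p) :: 'a) = of_nat m"
proof -
  have "(of_nat m :: 'a) = of_nat (m div p * p + m mod p)" by simp
  also have "\<dots> = of_nat (m mod p)" by (simp only: of_nat_add of_nat_mult charp) simp
  finally show ?thesis by simp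
qed

lemma exists_char:
  "\<exists>\<chi>::'a \<Rightarrow> complex. (\<forall>x y. \<chi> (x + y) = \<chi> x * \<chi> y) \<and> (\<exists>x0. \<chi> x0 \<noteq> 1) \<and> (\<forall>x. \<chi> x \<noteq> 0)"
proof -
  have p1: "p > 1" using prime_p prime_gt_1_nat by blast
  define T where "T x = (\<Sum>j<k. x ^ (p^j))" for x :: 'a
  have Tadd: "T (x+y) = T x + T y" for x y
    by (simp add: T_def frob_pow[OF prime_p charp] sum.distrib)
  have Tp: "T x ^ p = T x" for x
  proof -
    have "T x ^ p = T x ^ (p ^ 1)" by simp
    also have "\<dots> = (\<Sum>j<k. (x ^ (p^j)) ^ (p ^ 1))" unfolding T_def by (rule frob_sum[OF prime_p charp]) simp
    also have "\<dots> = (\<Sum>j<k. x ^ (p ^ Suc j))" by (simp add: power_mult[symmetric] mult.commute)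
    also have "\<dots> = (\<Sum>j<Suc k. x ^ (p ^ j)) - x ^ (p ^ 0)"
      by (subst sum.lessThan_Suc_shift) simp
    also have "\<dots> = T x + x ^ (p ^ k) - x" by (simp add: T_def)
    also have "x ^ (p ^ k) = x" using power_card_eq_same[of x] card_q by simp
    finally show ?thesis by simp
  qed
  define R where "R = {z::'a. z ^ p = z}"
  have ofnat_R: "(of_nat m :: 'a) ^ p = of_nat m" for m
  proof (induction m)
    case 0 thus ?case using p1 by (simp add: zero_power)
  next
    case (Suc m)
    have "(of_nat (Suc m) :: 'a) ^ p = (of_nat m + 1) ^ p" by (simp add: add.commute)
    also have "\<dots> = of_nat m ^ p + 1 ^ p" by (rule frob[OF prime_p charp])
    finally show ?case using Suc by simp
  qed
  have sub: "of_nat ` {0..<p} \<subseteq> R" using ofnat_R by (auto simp: R_def)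
  have cardim: "card (of_nat ` {0..<p} :: 'a set) = p"
    by (subst card_image) (auto simp: inj_on_def intro: of_nat_inj_p)
  have cardR: "card R \<le> p"
  proof -
    define P where "P = Polynomial.monom (1::'a) p - Polynomial.monom 1 1"
    have polyP: "poly P z = z ^ p - z" for z by (simp add: P_def poly_monom)
    have "Polynomial.coeff P p = 1" using p1 by (simp add: P_def)
    hence Pnz: "P \<noteq> 0" by auto
    have "degree P \<le> max (degree (Polynomial.monom (1::'a) p)) (degree (Polynomial.monom (1::'a) 1))"
      unfolding P_def by (rule degree_diff_le_max)
    also have "\<dots> \<le> p" using p1 by (simp add: degree_monom_eq)
    finally have dP: "degree P \<le> p" .
    have "R = {z. poly P z = 0}" by (auto simp: R_def polyP)
    thus ?thesis using card_poly_roots_bound[OF Pnz] dP by simp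
  qed
  have R_eq: "of_nat ` {0..<p} = R"
    by (rule card_subset_eq) (use sub cardim cardR card_mono[OF _ sub] in auto)
  have "\<forall>x. \<exists>m. m < p \<and> of_nat m = T x"
  proof
    fix x
    have "T x \<in> R" using Tp by (simp add: R_def)
    thus "\<exists>m. m < p \<and> of_nat m = T x" unfolding R_eq[symmetric] by force
  qed
  then obtain f where f: "\<And>x. f x < p" "\<And>x. of_nat (f x) = T x" by metis
  have fadd: "f (x + y) mod p = (f x + f y) mod p" for x y
  proof -
    have "(of_nat (f (x + y) mod p) :: 'a) = of_nat ((f x + f y) mod p)"
      by (simp add: of_nat_mod_p f Tadd)
    thus ?thesis by (rule of_nat_inj_p[rotated 2]) (use p1 in auto)
  qed
  have "\<exists>x0. T x0 \<noteq> 0"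
  proof (rule ccontr)
    assume "\<not> (\<exists>x0. T x0 \<noteq> 0)"
    hence all0: "T x = 0" for x by simp
    define PT where "PT = (\<Sum>j<k. Polynomial.monom (1::'a) (p^j))"
    have polyPT: "poly PT x = T x" for x by (simp add: PT_def T_def poly_sum poly_monom)
    have "Polynomial.coeff PT (p^(k-1)) = (\<Sum>j<k. if j = k - 1 then 1 else 0)"
      unfolding PT_def coeff_sum using p1 by (intro sum.cong) (auto simp: power_inject_exp)
    also have "\<dots> = 1" using k1 by simp
    finally have "PT \<noteq> 0" by auto
    hence "card {x. poly PT x = 0} \<le> degree PT" by (rule card_poly_roots_bound)
    also have "degree PT \<le> p^(k-1)" unfolding PT_def
      by (rule degree_sum_le) (use p1 in \<open>auto intro!: order.trans[OF degree_monom_le] power_increasing\<close>)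
    also have "p^(k-1) < p^k" using p1 k1 by (intro power_strict_increasing) auto
    finally have "card {x. poly PT x = 0} < card (UNIV :: 'a set)" using card_q by simp
    moreover have "{x. poly PT x = 0} = UNIV" using all0 polyPT by auto
    ultimately show False by simp
  qed
  then obtain x0 where x0: "T x0 \<noteq> 0" by blast
  define \<zeta> where "\<zeta> = cis (2 * pi / real p)"
  have zp: "\<zeta> ^ p = 1" using p1 by (simp add: \<zeta>_def DeMoivre)
  have zmod: "\<zeta> ^ m = \<zeta> ^ (m mod p)" for m
  proof -
    have "\<zeta> ^ m = \<zeta> ^ (m div p * p + m mod p)" by (simp only: div_mult_mod_eq)
    also have "\<dots> = (\<zeta> ^ p) ^ (m div p) * \<zeta> ^ (m mod p)" by (metis power_add power_mult mult.commute)
    finally show ?thesis using zp by simp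
  qed
  define \<chi> where "\<chi> x = \<zeta> ^ f x" for x
  have "\<chi> (x + y) = \<chi> x * \<chi> y" for x y
  proof -
    have "\<chi> (x + y) = \<zeta> ^ (f (x + y) mod p)" unfolding \<chi>_def by (rule zmod)
    also have "\<dots> = \<zeta> ^ (f x + f y)" by (simp add: fadd zmod[symmetric])
    finally show ?thesis by (simp add: \<chi>_def power_add)
  qed
  moreover have "\<chi> x0 \<noteq> 1"
  proof
    assume a: "\<chi> x0 = 1"
    have fx0: "f x0 \<noteq> 0"
    proof
      assume "f x0 = 0"
      hence "T x0 = 0" using f(2)[of x0] by simp
      thus False using x0 by simp
    qed
    have "\<chi> x0 = cis (real (f x0) * (2 * pi / real p))" by (simp add: \<chi>_def \<zeta>_def DeMoivre)
    hence "cos (real (f x0) * (2 * pi / real p)) = 1" using a by (metis cis.sel(1) one_complex.sel(1))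
    then obtain n :: int where n: "real (f x0) * (2 * pi / real p) = of_int n * 2 * pi"
      by (auto simp: cos_one_2pi_int)
    hence "real (f x0) = of_int n * real p" using p1 by (simp add: field_simps)
    hence "int (f x0) = n * int p" by (metis of_int_eq_iff of_int_mult of_int_of_nat_eq)
    moreover have "0 < f x0" "f x0 < p" using fx0 f(1)[of x0] by auto
    ultimately show False
      by (metis int_ops(1) less_imp_of_nat_less mult_strict_right_mono_neg not_less_iff_gr_or_eq
            of_nat_0_less_iff pos_zmult_eq_1_iff_lemma zmult_zless_mono2 mult_le_cancel_right2 int_one_le_iff_zero_less
            mult.commute le_less linorder_not_less mult_less_cancel_right2 of_nat_less_iff)
  qed
  moreover have "\<chi> x \<noteq> 0" for x by (simp add: \<chi>_def \<zeta>_def)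
  ultimately show ?thesis by blast
qed

end

lemma char_orth:
  fixes \<chi> :: "'a::{finite,field} \<Rightarrow> complex"
  assumes add: "\<And>x y. \<chi> (x + y) = \<chi> x * \<chi> y" and x0: "\<chi> x0 \<noteq> 1" and nz: "\<And>x. \<chi> x \<noteq> 0"
  shows "(\<Sum>y\<in>UNIV. \<chi> (y * z)) = (if z = 0 then of_nat (card (UNIV::'a set)) else 0)"
proof -
  have c0: "\<chi> 0 = 1" using add[of 0 0] nz[of 0] by simp
  have "(\<Sum>x\<in>UNIV. \<chi> (x + x0)) = (\<Sum>x\<in>UNIV. \<chi> x)"
    by (rule sum.reindex_bij_witness[of _ "\<lambda>x. x - x0" "\<lambda>x. x + x0"]) auto
  hence "\<chi> x0 * (\<Sum>x\<in>UNIV. \<chi> x) = (\<Sum>x\<in>UNIV. \<chi> x)" by (simp add: add sum_distrib_left mult.commute)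
  hence "(\<chi> x0 - 1) * (\<Sum>x\<in>UNIV. \<chi> x) = 0" by (simp add: algebra_simps)
  hence s0: "(\<Sum>x\<in>UNIV. \<chi> x) = 0" using x0 by simp
  show ?thesis
  proof (cases "z = 0")
    case True thus ?thesis using c0 by simp
  next
    case False
    have "(\<Sum>y\<in>UNIV. \<chi> (y * z)) = (\<Sum>x\<in>UNIV. \<chi> x)"
      by (rule sum.reindex_bij_witness[of _ "\<lambda>x. x / z" "\<lambda>x. x * z"]) (use False in auto)
    thus ?thesis using s0 False by simp
  qed
qed


lemma exists_gen:
  "\<exists>\<gamma>::'a::{finite,field}. \<gamma> \<noteq> 0 \<and> bij_betw (\<lambda>i. \<gamma> ^ i) {0..<card (UNIV::'a set) - 1} (UNIV - {0})"
proof -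
  define R where "R = (\<lparr>carrier = UNIV, monoid.mult = (\<lambda>x y. x * y), one = 1, ring.zero = 0, add = (\<lambda>x y. x + y)\<rparr> :: 'a ring)"
  have "\<exists>y. x + y = 0" for x :: 'a
    using add.right_inverse by blast
  moreover have "x \<noteq> 0 \<Longrightarrow> \<exists>y. x * y = 1" for x :: 'a
    by (rule exI[of _ "inverse x"]) auto
  ultimately have fR: "field R"
    unfolding R_def using add.right_inverse
    by unfold_locales (auto simp:algebra_simps Units_def)
  interpret field R by (rule fR)
  have fin: "finite (carrier R)" by (simp add: R_def)
  obtain a where a: "a \<in> carrier (mult_of R)" and gen: "carrier (mult_of R) = {a[^]\<^bsub>R\<^esub>i | i::nat . i \<in> UNIV}"
    using finite_field_mult_group_has_gen[OF fin] by blast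
  have pw: "a [^]\<^bsub>R\<^esub> (i::nat) = a ^ i" for i
    by (induction i) (simp_all add: R_def)
  have car: "carrier (mult_of R) = UNIV - {0}" by (simp add: R_def)
  define n where "n = card (UNIV::'a set) - 1"
  have a0: "a \<noteq> 0" using a car by auto
  have an: "a ^ n = 1" unfolding n_def by (rule power_card_minus_one[OF a0])
  have cardge: "card (UNIV::'a set) \<ge> 2"
  proof -
    have "{0::'a, 1} \<subseteq> UNIV" by simp
    hence "card {0::'a, 1} \<le> card (UNIV::'a set)" by (intro card_mono) auto
    thus ?thesis by simp
  qed
  hence npos: "n > 0" by (simp add: n_def)
  have amod: "a ^ i = a ^ (i mod n)" for i
  proof -
    have "a ^ i = a ^ (i div n * n + i mod n)" by (simp only: div_mult_mod_eq)
    also have "\<dots> = (a ^ n) ^ (i div n) * a ^ (i mod n)" by (metis power_add power_mult mult.commute)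
    finally show ?thesis using an by simp
  qed
  have img: "(\<lambda>i. a ^ i) ` {0..<n} = UNIV - {0}"
  proof
    show "(\<lambda>i. a ^ i) ` {0..<n} \<subseteq> UNIV - {0}" using a0 by auto
    show "UNIV - {0} \<subseteq> (\<lambda>i. a ^ i) ` {0..<n}"
    proof
      fix x :: 'a assume "x \<in> UNIV - {0}"
      hence "x \<in> carrier (mult_of R)" using car by simp
      then obtain i where "x = a ^ i" unfolding gen pw by blast
      hence "x = a ^ (i mod n)" using amod by simp
      moreover have "i mod n \<in> {0..<n}" using npos by simp
      ultimately show "x \<in> (\<lambda>i. a ^ i) ` {0..<n}" by blast
    qed
  qed
  have "card (UNIV - {0::'a}) = n" by (simp add: n_def card_Diff_singleton)
  hence "inj_on (\<lambda>i. a ^ i) {0..<n}" using img by (intro eq_card_imp_inj_on) auto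
  with img have "bij_betw (\<lambda>i. a ^ i) {0..<n} (UNIV - {0})" by (simp add: bij_betw_def)
  thus ?thesis unfolding n_def using a0 by blast
qed


lemma chi_sum:
  fixes \<chi> :: "'a::comm_monoid_add \<Rightarrow> complex"
  assumes add: "\<And>x y. \<chi> (x + y) = \<chi> x * \<chi> y" and c0: "\<chi> 0 = 1" and fin: "finite A"
  shows "\<chi> (\<Sum>s\<in>A. g s) = (\<Prod>s\<in>A. \<chi> (g s))"
  using fin by (induction A rule: finite_induct) (simp_all add: c0 add)

lemma main_det:
  fixes \<chi> :: "'a::{finite,field} \<Rightarrow> complex" and a :: "'a \<times> 'a \<Rightarrow> int"
  assumes add: "\<And>x y. \<chi> (x + y) = \<chi> x * \<chi> y" and c0: "\<chi> 0 = 1"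
    and orth: "\<And>z. (\<Sum>y\<in>UNIV. \<chi> (y * z)) = (if z = 0 then of_nat (card (UNIV::'a set)) else 0)"
  shows "\<exists>C. group_det ga_carrier ga_mult ga_inv a =
     ldet (UNIV - {0}) (\<lambda>s u. \<Sum>d\<in>UNIV. a (s/u, d)) *
     (ldet (UNIV - {0}) (\<lambda>s u. \<Sum>d\<in>UNIV. a (s/u, d)) - int (card (UNIV::'a set)) * C) ^ (card (UNIV::'a set) - 1)"
proof -
  define S where "S = UNIV - {0::'a}"
  define G where "G = S \<times> (UNIV::'a set)"
  define q where "q = card (UNIV::'a set)"
  have finS: "finite S" and finG: "finite G" by (auto simp: S_def G_def)
  have G_eq: "ga_carrier = G" by (auto simp: ga_carrier_def G_def S_def)
  define A :: int where "A = ldet S (\<lambda>s u. \<Sum>d\<in>UNIV. a (s/u, d))"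
  define a' where "a' c d = (of_int (a (c,d)) :: complex)" for c d
  define N where "N g h = a' (fst g / fst h) (fst g * (snd g - snd h))" for g h
  define F where "F g h = (if fst g = fst h then \<chi> (snd h * snd g) else 0)" for g h :: "'a \<times> 'a"
  define F' where "F' g h = (if fst g = fst h then \<chi> (-(snd g * snd h)) else 0)" for g h :: "'a \<times> 'a"
  define Mh where "Mh y s u = (\<Sum>w\<in>UNIV. a' (s/u) (s*w) * \<chi> (-(y*w)))" for y s u
  define Bd where "Bd g h = (if snd g = snd h then Mh (snd g) (fst g) (fst h) else 0)" for g h :: "'a \<times> 'a"
  define E where "E y = ldet S (Mh y)" for y

  have st1: "(of_int (group_det ga_carrier ga_mult ga_inv a) :: complex) =
      ldet G (\<lambda>g h. of_int (a (ga_mult g (ga_inv h))))"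
  proof -
    have "group_det ga_carrier ga_mult ga_inv a = ldet G (\<lambda>g h. a (ga_mult g (ga_inv h)))"
      by (simp add: group_det_def ldet_def G_eq)
    thus ?thesis by (simp add: ldet_of_int)
  qed
  have st2: "ldet G (\<lambda>g h. (of_int (a (ga_mult g (ga_inv h))) :: complex)) = ldet G N"
  proof -
    define \<tau> where "\<tau> g = (fst g, fst g * snd g)" for g :: "'a \<times> 'a"
    have bij: "bij_betw \<tau> G G"
      by (rule bij_betwI[where g = "\<lambda>g. (fst g, snd g / fst g)"]) (auto simp: \<tau>_def G_def S_def)
    have "ldet G (\<lambda>g h. (of_int (a (ga_mult g (ga_inv h))) :: complex)) =
        ldet G (\<lambda>g h. of_int (a (ga_mult (\<tau> g) (ga_inv (\<tau> h)))))"
      by (rule ldet_bij[OF bij finG])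
    also have "\<dots> = ldet G N"
    proof (rule ldet_cong)
      fix g h assume g: "g \<in> G" and h: "h \<in> G"
      obtain u v where huv: "h = (u,v)" by (cases h)
      have u0: "u \<noteq> 0" using h huv by (auto simp: G_def S_def)
      have "ga_mult (\<tau> g) (ga_inv (\<tau> h)) = (fst g / fst h, fst g * (snd g - snd h))"
        using u0 by (simp add: huv \<tau>_def ga_mult_def ga_inv_def field_simps)
      thus "(of_int (a (ga_mult (\<tau> g) (ga_inv (\<tau> h)))) :: complex) = N g h"
        by (simp add: N_def a'_def)
    qed
    finally show ?thesis .
  qed
  have st3: "(\<Sum>k\<in>G. N g k * F k h) = (\<Sum>k\<in>G. F g k * Bd k h)" if g: "g \<in> G" and h: "h \<in> G" for g h
  proof -
    obtain s t where gst: "g = (s,t)" by (cases g)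
    obtain u' y where huy: "h = (u',y)" by (cases h)
    have s0: "s \<in> S" and u0: "u' \<in> S" using g h gst huy by (auto simp: G_def)
    have "(\<Sum>k\<in>G. N g k * F k h) = (\<Sum>u\<in>S. \<Sum>v\<in>UNIV. N (s,t) (u,v) * F (u,v) (u',y))"
      by (simp add: G_def sum_prod_set gst huy)
    also have "\<dots> = (\<Sum>u\<in>S. if u = u' then (\<Sum>v\<in>UNIV. a' (s/u') (s*(t-v)) * \<chi> (y*v)) else 0)"
      by (rule sum.cong) (auto simp: N_def F_def mult.commute)
    also have "\<dots> = (\<Sum>v\<in>UNIV. a' (s/u') (s*(t-v)) * \<chi> (y*v))" using u0 by simp
    also have "\<dots> = (\<Sum>w\<in>UNIV. a' (s/u') (s*w) * \<chi> (y*(t-w)))"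
      by (rule sum.reindex_bij_witness[of _ "\<lambda>v. t - v" "\<lambda>w. t - w"]) auto
    also have "\<dots> = (\<Sum>w\<in>UNIV. \<chi> (y*t) * (a' (s/u') (s*w) * \<chi> (-(y*w))))"
    proof (rule sum.cong)
      fix w
      have "y*(t-w) = y*t + -(y*w)" by (simp add: algebra_simps)
      hence e: "\<chi> (y*(t-w)) = \<chi> (y*t) * \<chi> (-(y*w))" by (simp only: add)
      show "a' (s/u') (s*w) * \<chi> (y*(t-w)) = \<chi> (y*t) * (a' (s/u') (s*w) * \<chi> (-(y*w)))"
        by (simp only: e mult_ac)
    qed simp
    also have "\<dots> = \<chi> (y*t) * Mh y s u'" by (simp add: Mh_def sum_distrib_left)
    finally have L: "(\<Sum>k\<in>G. N g k * F k h) = \<chi> (y*t) * Mh y s u'" .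
    have "(\<Sum>k\<in>G. F g k * Bd k h) = (\<Sum>u\<in>S. \<Sum>v\<in>UNIV. F (s,t) (u,v) * Bd (u,v) (u',y))"
      by (simp add: G_def sum_prod_set gst huy)
    also have "\<dots> = (\<Sum>u\<in>S. if u = s then \<chi> (y*t) * Mh y s u' else 0)"
    proof (rule sum.cong)
      fix u assume "u \<in> S"
      have "(\<Sum>v\<in>UNIV. F (s,t) (u,v) * Bd (u,v) (u',y)) = (\<Sum>v\<in>UNIV. if v = y then (if u = s then \<chi> (y*t) * Mh y s u' else 0) else 0)"
        by (rule sum.cong) (auto simp: F_def Bd_def)
      also have "\<dots> = (if u = s then \<chi> (y*t) * Mh y s u' else 0)" by simp
      finally show "(\<Sum>v\<in>UNIV. F (s,t) (u,v) * Bd (u,v) (u',y)) = (if u = s then \<chi> (y*t) * Mh y s u' else 0)" .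
    qed simp
    also have "\<dots> = \<chi> (y*t) * Mh y s u'" using s0 by simp
    finally show ?thesis using L by simp
  qed
  have st4: "(\<Sum>k\<in>G. F g k * F' k h) = (if g = h then of_nat q else 0)" if g: "g \<in> G" and h: "h \<in> G" for g h
  proof -
    obtain s t where gst: "g = (s,t)" by (cases g)
    obtain u' y where huy: "h = (u',y)" by (cases h)
    have s0: "s \<in> S" and u0: "u' \<in> S" using g h gst huy by (auto simp: G_def)
    have "(\<Sum>k\<in>G. F g k * F' k h) = (\<Sum>u\<in>S. \<Sum>v\<in>UNIV. F (s,t) (u,v) * F' (u,v) (u',y))"
      by (simp add: G_def sum_prod_set gst huy)
    also have "\<dots> = (\<Sum>u\<in>S. if u = s then (if s = u' then (\<Sum>v\<in>UNIV. \<chi> (v * (t - y))) else 0) else 0)"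
    proof (rule sum.cong)
      fix u assume "u \<in> S"
      have "(\<Sum>v\<in>UNIV. F (s,t) (u,v) * F' (u,v) (u',y)) = (\<Sum>v\<in>UNIV. if u = s then (if s = u' then \<chi> (v * (t - y)) else 0) else 0)"
      proof (rule sum.cong)
        fix v
        have "\<chi> (v * t) * \<chi> (-(v * y)) = \<chi> (v * (t - y))"
          by (simp add: add[symmetric] algebra_simps)
        thus "F (s,t) (u,v) * F' (u,v) (u',y) = (if u = s then (if s = u' then \<chi> (v * (t - y)) else 0) else 0)"
          by (auto simp: F_def F'_def)
      qed simp
      also have "\<dots> = (if u = s then (if s = u' then (\<Sum>v\<in>UNIV. \<chi> (v * (t - y))) else 0) else 0)" by simp
      finally show "(\<Sum>v\<in>UNIV. F (s,t) (u,v) * F' (u,v) (u',y)) = (if u = s then (if s = u' then (\<Sum>v\<in>UNIV. \<chi> (v * (t - y))) else 0) else 0)" .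
    qed simp
    also have "\<dots> = (if s = u' then (\<Sum>v\<in>UNIV. \<chi> (v * (t - y))) else 0)" using s0 by simp
    also have "\<dots> = (if g = h then of_nat q else 0)" by (simp add: orth gst huy q_def c0)
    finally show ?thesis .
  qed
  have FF': "ldet G F * ldet G F' = of_nat q ^ card G"
  proof -
    have "ldet G F * ldet G F' = ldet G (\<lambda>g h. \<Sum>k\<in>G. F g k * F' k h)"
      by (rule ldet_mult[OF finG, symmetric])
    also have "\<dots> = ldet G (\<lambda>g h. if g = h then of_nat q else 0)"
      by (rule ldet_cong) (simp add: st4)
    also have "\<dots> = of_nat q ^ card G" by (simp add: ldet_diag[OF finG])
    finally show ?thesis .
  qed
  have "q > 0" unfolding q_def by (rule finite_UNIV_card_ge_0) simp
  hence Fnz: "ldet G F \<noteq> 0" using FF' by auto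
  have "ldet G N * ldet G F = ldet G F * ldet G Bd"
  proof -
    have "ldet G N * ldet G F = ldet G (\<lambda>g h. \<Sum>k\<in>G. N g k * F k h)"
      by (rule ldet_mult[OF finG, symmetric])
    also have "\<dots> = ldet G (\<lambda>g h. \<Sum>k\<in>G. F g k * Bd k h)"
      by (rule ldet_cong) (simp add: st3)
    also have "\<dots> = ldet G F * ldet G Bd" by (rule ldet_mult[OF finG])
    finally show ?thesis .
  qed
  hence NBd: "ldet G N = ldet G Bd" using Fnz by (simp add: mult.commute)
  have st5: "ldet G Bd = (\<Prod>y\<in>UNIV. E y)"
    unfolding G_def Bd_def E_def by (rule ldet_blockdiag[OF finS]) simp
  have st6: "E y = E 1" if y: "y \<noteq> 0" for y
  proof -
    have bij: "bij_betw (\<lambda>s. y * s) S S"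
      by (rule bij_betwI[where g = "\<lambda>s. s / y"]) (use y in \<open>auto simp: S_def\<close>)
    have "E y = ldet S (\<lambda>s u. Mh y (y * s) (y * u))"
      unfolding E_def by (rule ldet_bij[OF bij finS])
    also have "\<dots> = E 1"
      unfolding E_def
    proof (rule ldet_cong)
      fix s u assume "s \<in> S" "u \<in> S"
      have "Mh y (y * s) (y * u) = (\<Sum>w\<in>UNIV. a' (s/u) (s*(y*w)) * \<chi> (-(y*w)))"
        unfolding Mh_def using y by (intro sum.cong) (auto simp: field_simps)
      also have "\<dots> = (\<Sum>w\<in>UNIV. a' (s/u) (s*w) * \<chi> (-(1*w)))"
        by (rule sum.reindex_bij_witness[of _ "\<lambda>w. w / y" "\<lambda>w. y * w"]) (use y in auto)
      finally show "Mh y (y * s) (y * u) = Mh 1 s u" by (simp add: Mh_def)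
    qed
    finally show ?thesis .
  qed
  have st7: "E 0 = of_int A"
  proof -
    have "E 0 = ldet S (\<lambda>s u. of_int (\<Sum>d\<in>UNIV. a (s/u, d)))"
      unfolding E_def
    proof (rule ldet_cong)
      fix s u assume s: "s \<in> S" "u \<in> S"
      have "Mh 0 s u = (\<Sum>w\<in>UNIV. a' (s/u) (s*w))" by (simp add: Mh_def c0)
      also have "\<dots> = (\<Sum>d\<in>UNIV. a' (s/u) d)"
        by (rule sum.reindex_bij_witness[of _ "\<lambda>w. w / s" "\<lambda>w. s * w"]) (use s in \<open>auto simp: S_def\<close>)
      finally show "Mh 0 s u = of_int (\<Sum>d\<in>UNIV. a (s/u, d))" by (simp add: a'_def)
    qed
    also have "\<dots> = of_int A" unfolding A_def by (rule ldet_of_int)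
    finally show ?thesis .
  qed
  have cardS: "card S = q - 1" by (simp add: S_def q_def card_Diff_singleton)
  have st8: "(\<Prod>y\<in>UNIV. E y) = E 0 * E 1 ^ (q - 1)"
  proof -
    have "(\<Prod>y\<in>UNIV. E y) = E 0 * (\<Prod>y\<in>S. E y)"
      unfolding S_def by (rule prod.remove) auto
    also have "(\<Prod>y\<in>S. E y) = (\<Prod>y\<in>S. E 1)" by (rule prod.cong[OF refl], rule st6) (simp add: S_def)
    finally show ?thesis by (simp add: cardS)
  qed
  have st9: "\<exists>C::int. E 1 = of_int (A - int q * C)"
  proof -
    define P where "P = {\<sigma>. \<sigma> permutes S}"
    define PW where "PW = PiE S (\<lambda>_. UNIV::'a set)"
    define T where "T \<sigma> W = sign \<sigma> * (\<Prod>s\<in>S. a (s / \<sigma> s, s * W s))" for \<sigma> W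
    define Z where "Z W = (\<Sum>s\<in>S. W s)" for W :: "'a \<Rightarrow> 'a"
    have finP: "finite P" unfolding P_def using finS by (rule finite_permutations)
    have finPW: "finite PW" unfolding PW_def using finS by (intro finite_PiE) auto
    have Eexp: "E y = (\<Sum>\<sigma>\<in>P. \<Sum>W\<in>PW. of_int (T \<sigma> W) * \<chi> (-(y * Z W)))" for y
    proof -
      have "E y = (\<Sum>\<sigma>\<in>P. of_int (sign \<sigma>) * (\<Prod>s\<in>S. Mh y s (\<sigma> s)))"
        by (simp add: E_def ldet_def P_def)
      also have "\<dots> = (\<Sum>\<sigma>\<in>P. \<Sum>W\<in>PW. of_int (T \<sigma> W) * \<chi> (-(y * Z W)))"
      proof (rule sum.cong)
        fix \<sigma> assume "\<sigma> \<in> P"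
        have "(\<Prod>s\<in>S. Mh y s (\<sigma> s)) = (\<Sum>W\<in>PW. \<Prod>s\<in>S. a' (s / \<sigma> s) (s * W s) * \<chi> (-(y * W s)))"
          unfolding Mh_def PW_def by (rule prod_sum_PiE) (use finS in auto)
        also have "\<dots> = (\<Sum>W\<in>PW. of_int (\<Prod>s\<in>S. a (s / \<sigma> s, s * W s)) * \<chi> (-(y * Z W)))"
        proof (rule sum.cong)
          fix W
          have "\<chi> (-(y * Z W)) = \<chi> (\<Sum>s\<in>S. -(y * W s))"
            by (simp add: Z_def sum_distrib_left sum_negf)
          also have "\<dots> = (\<Prod>s\<in>S. \<chi> (-(y * W s)))" by (rule chi_sum[OF add c0 finS])
          finally show "(\<Prod>s\<in>S. a' (s / \<sigma> s) (s * W s) * \<chi> (-(y * W s))) =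
              of_int (\<Prod>s\<in>S. a (s / \<sigma> s, s * W s)) * \<chi> (-(y * Z W))"
            by (simp add: prod.distrib a'_def of_int_prod)
        qed simp
        finally show "of_int (sign \<sigma>) * (\<Prod>s\<in>S. Mh y s (\<sigma> s)) = (\<Sum>W\<in>PW. of_int (T \<sigma> W) * \<chi> (-(y * Z W)))"
          by (simp add: sum_distrib_left T_def mult_ac)
      qed simp
      finally show ?thesis .
    qed
    define C where "C = (\<Sum>\<sigma>\<in>P. \<Sum>W\<in>PW. if Z W = 1 then T \<sigma> W else 0)"
    have sum1: "(\<Sum>y\<in>UNIV. E y * \<chi> y) = of_nat q * of_int C"
    proof -
      have "(\<Sum>y\<in>UNIV. E y * \<chi> y) = (\<Sum>y\<in>UNIV. \<Sum>\<sigma>\<in>P. \<Sum>W\<in>PW. of_int (T \<sigma> W) * (\<chi> (y * (1 - Z W))))"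
      proof (rule sum.cong)
        fix y
        have "\<chi> (-(y * Z W)) * \<chi> y = \<chi> (y * (1 - Z W))" for W
          by (simp add: add[symmetric] algebra_simps)
        thus "E y * \<chi> y = (\<Sum>\<sigma>\<in>P. \<Sum>W\<in>PW. of_int (T \<sigma> W) * (\<chi> (y * (1 - Z W))))"
          by (simp add: Eexp sum_distrib_right mult.assoc)
      qed simp
      also have "\<dots> = (\<Sum>\<sigma>\<in>P. \<Sum>y\<in>UNIV. \<Sum>W\<in>PW. of_int (T \<sigma> W) * (\<chi> (y * (1 - Z W))))"
        by (rule sum.swap)
      also have "\<dots> = (\<Sum>\<sigma>\<in>P. \<Sum>W\<in>PW. \<Sum>y\<in>UNIV. of_int (T \<sigma> W) * (\<chi> (y * (1 - Z W))))"
        by (rule sum.cong[OF refl], rule sum.swap)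
      also have "\<dots> = (\<Sum>\<sigma>\<in>P. \<Sum>W\<in>PW. of_nat q * of_int (if Z W = 1 then T \<sigma> W else 0))"
      proof (intro sum.cong refl)
        fix \<sigma> W
        have "(\<Sum>y\<in>UNIV. of_int (T \<sigma> W) * (\<chi> (y * (1 - Z W)))) = of_int (T \<sigma> W) * (\<Sum>y\<in>UNIV. \<chi> (y * (1 - Z W)))"
          by (simp add: sum_distrib_left)
        also have "\<dots> = of_nat q * of_int (if Z W = 1 then T \<sigma> W else 0)"
          by (simp add: orth q_def)
        finally show "(\<Sum>y\<in>UNIV. of_int (T \<sigma> W) * (\<chi> (y * (1 - Z W)))) = of_nat q * of_int (if Z W = 1 then T \<sigma> W else 0)" .
      qed
      also have "\<dots> = of_nat q * of_int C"
        by (simp add: C_def sum_distrib_left of_int_sum)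
      finally show ?thesis .
    qed
    have sum2: "(\<Sum>y\<in>UNIV. E y * \<chi> y) = E 0 - E 1"
    proof -
      have "(\<Sum>y\<in>UNIV. E y * \<chi> y) = E 0 * \<chi> 0 + (\<Sum>y\<in>S. E y * \<chi> y)"
        unfolding S_def by (rule sum.remove) auto
      also have "(\<Sum>y\<in>S. E y * \<chi> y) = (\<Sum>y\<in>S. E 1 * \<chi> y)"
        by (rule sum.cong[OF refl], subst st6) (auto simp: S_def)
      also have "\<dots> = E 1 * (\<Sum>y\<in>S. \<chi> y)"
        by (simp add: sum_distrib_left)
      also have "(\<Sum>y\<in>S. \<chi> y) = (\<Sum>y\<in>UNIV. \<chi> y) - \<chi> 0"
        unfolding S_def by (subst sum.remove[of UNIV 0]) auto
      also have "(\<Sum>y\<in>UNIV. \<chi> y) = 0" using orth[of 1] by simp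
      finally show ?thesis using c0 by simp
    qed
    have "E 1 = of_int (A - int q * C)" using sum1 sum2 st7 by (simp add: algebra_simps)
    thus ?thesis by blast
  qed
  then obtain C :: int where C: "E 1 = of_int (A - int q * C)" by blast
  have "(of_int (group_det ga_carrier ga_mult ga_inv a) :: complex) = of_int (A * (A - int q * C) ^ (q - 1))"
    using st1 st2 NBd st5 st8 st7 C by simp
  hence "group_det ga_carrier ga_mult ga_inv a = A * (A - int q * C) ^ (q - 1)"
    by (simp only: of_int_eq_iff)
  thus ?thesis unfolding A_def S_def q_def by blast
qed


theorem theorem1:
  fixes p k :: nat
  assumes "prime p" and "k \<ge> 1" and "card (UNIV :: 'a::{finite,field} set) = p ^ k"
    and "int_group_det (ga_carrier :: ('a \<times> 'a) set) ga_mult ga_inv D"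
  shows "\<exists>A B :: int. cyclic_int_det (p ^ k - 1) A \<and> D = A * B ^ (p ^ k - 1)
            \<and> [B = A] (mod int (p ^ k))"
proof -
  obtain a where Da: "D = group_det (ga_carrier :: ('a \<times> 'a) set) ga_mult ga_inv a"
    using assms(4) by (auto simp: int_group_det_def)
  obtain \<chi> :: "'a \<Rightarrow> complex" where add: "\<And>x y. \<chi> (x + y) = \<chi> x * \<chi> y"
      and x0: "\<exists>x0. \<chi> x0 \<noteq> 1" and nz: "\<And>x. \<chi> x \<noteq> 0"
    using exists_char[OF assms(1,2,3)] by blast
  have c0: "\<chi> 0 = 1" using add[of 0 0] nz[of 0] by simp
  have orth: "(\<Sum>y\<in>UNIV. \<chi> (y * z)) = (if z = 0 then of_nat (card (UNIV::'a set)) else 0)" for z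
    using x0 char_orth[OF add _ nz] by blast
  define S where "S = UNIV - {0::'a}"
  define A where "A = ldet S (\<lambda>s u. \<Sum>d\<in>UNIV. a (s/u, d))"
  obtain C where DC: "D = A * (A - int (card (UNIV::'a set)) * C) ^ (card (UNIV::'a set) - 1)"
    using main_det[OF add c0 orth, of a] Da unfolding A_def S_def by blast
  define n where "n = p ^ k - 1"
  have qn: "card (UNIV::'a set) = n + 1" and npos: "n > 0"
  proof -
    have "{0::'a, 1} \<subseteq> UNIV" by simp
    hence "card {0::'a, 1} \<le> card (UNIV::'a set)" by (intro card_mono) auto
    hence "card (UNIV::'a set) \<ge> 2" by simp
    thus "card (UNIV::'a set) = n + 1" "n > 0" using assms(3) by (auto simp: n_def)
  qed
  obtain \<gamma> :: 'a where g0: "\<gamma> \<noteq> 0" and bij: "bij_betw (\<lambda>i. \<gamma> ^ i) {0..<n} S"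
    using exists_gen[where 'a='a] qn unfolding S_def by auto
  have gn: "\<gamma> ^ n = 1" using power_card_minus_one[OF g0] qn by simp
  have gmod: "\<gamma> ^ m = \<gamma> ^ (m mod n)" for m
  proof -
    have "\<gamma> ^ m = \<gamma> ^ (m div n * n + m mod n)" by (simp only: div_mult_mod_eq)
    also have "\<dots> = (\<gamma> ^ n) ^ (m div n) * \<gamma> ^ (m mod n)" by (metis power_add power_mult mult.commute)
    finally show ?thesis using gn by simp
  qed
  define b where "b m = (\<Sum>d\<in>UNIV. a (\<gamma> ^ m, d))" for m
  have cyc: "cyclic_int_det n A"
  proof -
    have "A = ldet {0..<n} (\<lambda>i j. \<Sum>d\<in>UNIV. a (\<gamma> ^ i / \<gamma> ^ j, d))"
      unfolding A_def by (rule ldet_bij[OF bij]) simp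
    also have "\<dots> = ldet {0..<n} (\<lambda>i j. b (cyc_mult n i (cyc_inv n j)))"
    proof (rule ldet_cong)
      fix i j assume i: "i \<in> {0..<n}" and j: "j \<in> {0..<n}"
      have "\<gamma> ^ (n - j) * \<gamma> ^ j = 1" using j gn by (simp add: power_add[symmetric])
      hence inv: "\<gamma> ^ (n - j) = 1 / \<gamma> ^ j" using g0 by (simp add: field_simps)
      have "\<gamma> ^ ((i + (n - j) mod n) mod n) = \<gamma> ^ (i + (n - j) mod n)" by (rule gmod[symmetric])
      also have "\<dots> = \<gamma> ^ i * \<gamma> ^ ((n - j) mod n)" by (simp add: power_add)
      also have "\<gamma> ^ ((n - j) mod n) = \<gamma> ^ (n - j)" by (rule gmod[symmetric])
      finally have "\<gamma> ^ ((i + (n - j) mod n) mod n) = \<gamma> ^ i / \<gamma> ^ j" using inv by simp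
      thus "(\<Sum>d\<in>UNIV. a (\<gamma> ^ i / \<gamma> ^ j, d)) = b (cyc_mult n i (cyc_inv n j))"
        by (simp add: b_def cyc_mult_def cyc_inv_def)
    qed
    also have "\<dots> = group_det (cyc_carrier n) (cyc_mult n) (cyc_inv n) b"
      by (simp add: group_det_def ldet_def cyc_carrier_def)
    finally show ?thesis unfolding cyclic_int_det_def int_group_det_def by blast
  qed
  define B where "B = A - int (card (UNIV::'a set)) * C"
  have "D = A * B ^ (p ^ k - 1)" using DC assms(3) by (simp add: B_def)
  moreover have "[B = A] (mod int (p ^ k))"
    using assms(3) by (simp add: B_def cong_iff_dvd_diff)
  ultimately show ?thesis using cyc unfolding n_def by blast
qed

end
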